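(* Let $p$ be a prime and $t\in\mathbb Z/(p)$ nonzero, and let $j_0,\dots,j_{p-1}\in\mathbb Z/(p)$ (indices read in $\mathbb Z/(p)$) satisfy $j_i=j_{-i}$ and $j_{t^s i}=t^s j_i-(t^s-1)j_0$ for all $i\in\mathbb Z/(p)$, $s\in\mathbb Z$, with $j_i\ne j_k$ for some $i\ne k$. Then the multiplicative order of $t$ in $(\mathbb Z/(p))^\times$ is odd. *)

theory Defs
  imports Main "Berlekamp_Zassenhaus.Finite_Field"
begin

definition mult_order :: "'a::monoid_mult \<Rightarrow> nat" where
  "mult_order x = (LEAST n. n > 0 \<and> x ^ n = 1)"

end

theory Submission
  imports Defs "Berlekamp_Zassenhaus.Berlekamp_Type_Based"
begin

theorem mainTheorem11:
  fixes t :: "'p::prime_card mod_ring"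
    and j :: "'p mod_ring \<Rightarrow> 'p mod_ring"
  assumes "t \<noteq> 0"
    and "\<And>i. j i = j (- i)"
    and "\<And>i (s::int). j (t powi s * i) = t powi s * j i - (t powi s - 1) * j 0"
    and "\<exists>i k. i \<noteq> k \<and> j i \<noteq> j k"
  shows "odd (mult_order t)"
proof (rule ccontr)
  assume ev: "\<not> odd (mult_order t)"
  have c2: "CARD('p) \<ge> 2" using prime_card prime_ge_2_nat by blast
  have "t * t ^ (CARD('p) - 1) = t * 1"
    using fermat_theorem_mod_ring[of t] c2
  proof -
    have "CARD('p) = Suc (CARD('p) - 1)" using c2 by simp
    hence "t ^ CARD('p) = t * t ^ (CARD('p) - 1)" by (metis power_Suc)
    thus ?thesis using fermat_theorem_mod_ring[of t] by simp
  qed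
  hence f: "t ^ (CARD('p) - 1) = 1" using assms(1) by simp
  have ex: "\<exists>n. n > 0 \<and> t ^ n = 1" using f c2 by (intro exI[of _ "CARD('p) - 1"]) auto
  define n where "n = mult_order t"
  have n1: "n > 0 \<and> t ^ n = 1" unfolding n_def mult_order_def by (rule LeastI_ex[OF ex])
  have nmin: "\<And>k. 0 < k \<Longrightarrow> k < n \<Longrightarrow> t ^ k \<noteq> 1"
    unfolding n_def mult_order_def using not_less_Least by blast
  obtain m where m: "n = 2 * m" using ev n_def by auto
  have m0: "0 < m" "m < n" using m n1 by auto
  define x where "x = t ^ m"
  have "x * x = 1" using n1 m unfolding x_def by (simp add: power_add[symmetric] mult_2)
  hence "(x - 1) * (x + 1) = 0" by (simp add: algebra_simps)
  moreover have "x \<noteq> 1" using nmin m0 x_def by auto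
  ultimately have xm: "x = -1" by (simp add: eq_neg_iff_add_eq_0)
  have two: "(2::'p mod_ring) \<noteq> 0"
  proof
    assume "(2::'p mod_ring) = 0"
    hence "(1::'p mod_ring) + 1 = 0" by (simp add: one_add_one)
    hence "-1 = (1::'p mod_ring)" by (simp add: neg_eq_iff_add_eq_0)
    thus False using xm \<open>x \<noteq> 1\<close> by simp
  qed
  have "\<And>i. j i = j 0"
  proof -
    fix i
    have "j (x * i) = x * j i - (x - 1) * j 0"
      using assms(3)[of "int m" i] unfolding x_def by simp
    hence "j (- i) = - j i + 2 * j 0" using xm by simp
    hence "2 * j i = 2 * j 0" using assms(2)[of i] by (simp add: algebra_simps)
    thus "j i = j 0" using two by simp
  qed
  thus False using assms(4) by metis
qed

end
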